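(* Let $\theta\in(0,\pi)$ and let $C$ be the domain $C=\mathbb{C}\setminus\bigcup_{n\in\mathbb{Z}}\{n+iy:|y|\ge b_n\}$, where $b_0=1$ and $b_n=|n|\tan(\theta/2)$ for $n\in\mathbb{Z}\setminus\{0\}$. For $t>1$, let $J_t$ be the connected component of $C\cap\{|z|=t\}$ containing the point $t$, and define $\Theta(t)$ by $t\Theta(t)=l(J_t)$, where $l(J_t)$ is the length of the arc $J_t$. Then $\lim_{t\to+\infty}\Theta(t)=\theta$. *)

theory Defs
  imports "HOL-Analysis.Analysis"
begin

definition slit_height :: "real \<Rightarrow> int \<Rightarrow> real" where
  "slit_height \<theta> n = (if n = 0 then 1 else real_of_int \<bar>n\<bar> * tan (\<theta> / 2))"

definition slit_domain :: "real \<Rightarrow> complex set" where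
  "slit_domain \<theta> = UNIV - (\<Union>n::int. {z. Re z = of_int n \<and> \<bar>Im z\<bar> \<ge> slit_height \<theta> n})"

definition arcJ :: "real \<Rightarrow> real \<Rightarrow> complex set" where
  "arcJ \<theta> t = connected_component_set (slit_domain \<theta> \<inter> sphere 0 t) (complex_of_real t)"

definition circle_arc_length :: "real \<Rightarrow> complex set \<Rightarrow> real" where
  "circle_arc_length t J = t * measure lborel {\<phi> \<in> {-pi<..pi}. complex_of_real t * cis \<phi> \<in> J}"

definition Theta :: "real \<Rightarrow> real \<Rightarrow> real" where
  "Theta \<theta> t = circle_arc_length t (arcJ \<theta> t) / t"

end

theory Submission
  imports Defs
begin

lemma angle_iff:
  fixes \<phi> r :: real
  assumes "-pi \<le> \<phi>" "\<phi> \<le> pi" "-1 \<le> r" "r \<le> 1"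
  shows "r < cos \<phi> \<longleftrightarrow> \<bar>\<phi>\<bar> < arccos r"
proof -
  have c: "cos \<phi> = cos \<bar>\<phi>\<bar>" by (simp add: abs_if)
  have a: "0 \<le> arccos r" "arccos r \<le> pi" using arccos_bounded assms by auto
  have ca: "cos (arccos r) = r" using assms by simp
  show ?thesis
  proof
    assume "r < cos \<phi>"
    show "\<bar>\<phi>\<bar> < arccos r"
    proof (rule ccontr)
      assume "\<not> \<bar>\<phi>\<bar> < arccos r"
      then have h1: "arccos r \<le> \<bar>\<phi>\<bar>" by linarith
      have h2: "\<bar>\<phi>\<bar> \<le> pi" using assms(1,2) by (simp add: abs_le_iff)
      have "cos \<bar>\<phi>\<bar> \<le> cos (arccos r)"
        by (rule cos_monotone_0_pi_le[OF a(1) h1 h2])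
      then show False using \<open>r < cos \<phi>\<close> c ca by linarith
    qed
  next
    assume "\<bar>\<phi>\<bar> < arccos r"
    then have "cos (arccos r) < cos \<bar>\<phi>\<bar>"
      by (rule cos_monotone_0_pi[OF abs_ge_zero _ a(2)])
    then show "r < cos \<phi>" using c ca by linarith
  qed
qed

lemma block_iff:
  fixes \<theta> t m y :: real
  assumes "0 < \<theta>" "\<theta> < pi" "0 < t" "0 < m" "y^2 = t^2 - m^2"
  shows "m * tan (\<theta>/2) \<le> \<bar>y\<bar> \<longleftrightarrow> m \<le> t * cos (\<theta>/2)"
proof -
  define c where "c = cos (\<theta>/2)"
  define s where "s = sin (\<theta>/2)"
  have c0: "0 < c" unfolding c_def using assms by (intro cos_gt_zero_pi) auto
  have s0: "0 < s" unfolding s_def using assms by (intro sin_gt_zero) auto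
  have sc: "s^2 + c^2 = 1" unfolding s_def c_def by simp
  have tn: "tan (\<theta>/2) = s / c" unfolding s_def c_def tan_def by simp
  have "m * tan (\<theta>/2) \<le> \<bar>y\<bar> \<longleftrightarrow> (m * s / c)^2 \<le> y^2"
  proof -
    have "0 \<le> m * s / c" using assms s0 c0 by simp
    then show ?thesis unfolding tn
      by (metis abs_le_square_iff abs_of_nonneg power2_abs times_divide_eq_right)
  qed
  also have "\<dots> \<longleftrightarrow> m^2 * s^2 \<le> y^2 * c^2"
    using c0 by (simp add: power_divide power_mult_distrib divide_le_eq)
  also have "\<dots> \<longleftrightarrow> m^2 \<le> (t*c)^2"
  proof -
    have "y^2 * c^2 = (t^2 - m^2) * c^2" using assms(5) by simp
    then have "y^2 * c^2 = t^2*c^2 - m^2 * c^2" by (simp add: algebra_simps)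
    moreover have "m^2 * s^2 = m^2 - m^2*c^2"
    proof -
      have "m^2 * s^2 = m^2 * (1 - c^2)" using sc by simp
      then show ?thesis by (simp add: algebra_simps)
    qed
    ultimately show ?thesis by (simp add: power_mult_distrib)
  qed
  also have "\<dots> \<longleftrightarrow> m \<le> t * c"
    using assms c0 by (intro power_mono_iff) auto
  finally show ?thesis unfolding c_def .
qed

lemma arcJ_eq:
  fixes \<theta> t :: real
  assumes th: "0 < \<theta>" "\<theta> < pi" and t: "0 < t" and n1: "1 \<le> t * cos (\<theta>/2)"
  defines "n \<equiv> real_of_int \<lfloor>t * cos (\<theta>/2)\<rfloor>"
  shows "arcJ \<theta> t = {z \<in> sphere 0 t. n < Re z}"
proof -
  define c where "c = cos (\<theta>/2)"
  have c0: "0 < c" unfolding c_def using th by (intro cos_gt_zero_pi) auto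
  have c1: "c < 1"
  proof -
    have "cos (\<theta>/2) < cos 0" using th by (intro cos_monotone_0_pi) auto
    then show ?thesis unfolding c_def by simp
  qed
  have nle: "n \<le> t * c" unfolding n_def c_def by simp
  have ngt: "t * c - 1 < n" unfolding n_def c_def by linarith
  have npos: "1 \<le> n" using n1 unfolding n_def by (simp add: le_floor_iff)
  have "t * c < t * 1" using c1 t by (intro mult_strict_left_mono)
  then have nt: "n < t" using nle by simp
  have sph: "Re z ^ 2 + Im z ^ 2 = t^2" if "z \<in> sphere 0 t" for z
    using that cmod_power2[of z] by simp
  define S where "S = slit_domain \<theta> \<inter> sphere 0 t"
  define K where "K = {z \<in> sphere 0 t. n < Re z}"
  have memS: "z \<in> slit_domain \<theta> \<longleftrightarrow> (\<forall>m::int. \<not> (Re z = of_int m \<and> slit_height \<theta> m \<le> \<bar>Im z\<bar>))" for z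
    unfolding slit_domain_def by auto
  have KS: "K \<subseteq> S"
  proof
    fix z assume z: "z \<in> K"
    have zs: "z \<in> sphere 0 t" using z K_def by auto
    have "\<not> (Re z = of_int m \<and> slit_height \<theta> m \<le> \<bar>Im z\<bar>)" for m :: int
    proof
      assume h: "Re z = of_int m \<and> slit_height \<theta> m \<le> \<bar>Im z\<bar>"
      have mn: "n < of_int m" using h z K_def by auto
      then have m0: "m \<noteq> 0" "0 < real_of_int m" using npos by auto
      have mgt: "t * c < of_int m" using mn unfolding n_def c_def
        by (metis floor_less_iff of_int_floor_le less_le_trans not_less of_int_less_iff)
      have "(Im z)^2 = t^2 - (of_int m)^2" using sph[OF zs] h by simp
      from block_iff[OF th t m0(2) this] have "of_int m * tan (\<theta>/2) \<le> \<bar>Im z\<bar> \<longleftrightarrow> of_int m \<le> t * c"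
        unfolding c_def by simp
      moreover have "of_int m * tan (\<theta>/2) \<le> \<bar>Im z\<bar>"
        using h m0 unfolding slit_height_def by simp
      ultimately show False using mgt by simp
    qed
    then show "z \<in> S" unfolding S_def using memS zs by auto
  qed
  define a where "a = arccos (n / t)"
  have "0 \<le> n / t" using npos t by simp
  then have nt1a: "-1 \<le> n / t" by linarith
  have nt1b: "n / t \<le> 1" using nt t by simp
  note nt1 = nt1a nt1b
  have Kimg: "K = (\<lambda>\<phi>. complex_of_real t * cis \<phi>) ` {-a<..<a}"
  proof
    show "K \<subseteq> (\<lambda>\<phi>. complex_of_real t * cis \<phi>) ` {-a<..<a}"
    proof
      fix z assume z: "z \<in> K"
      then have zn: "norm z = t" "n < Re z" unfolding K_def by auto
      then have z0: "z \<noteq> 0" using t by auto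
      have ze: "z = complex_of_real t * cis (Arg z)"
        using rcis_cmod_Arg[of z] zn by (simp add: rcis_def)
      have "Re z = t * cos (Arg z)" by (subst ze) simp
      then have "n / t < cos (Arg z)" using zn t by (simp add: divide_less_eq mult.commute)
      then have "\<bar>Arg z\<bar> < a" unfolding a_def
        using angle_iff[OF _ _ nt1] Arg_bounded[of z] by auto
      then show "z \<in> (\<lambda>\<phi>. complex_of_real t * cis \<phi>) ` {-a<..<a}"
        using ze by (intro image_eqI[of _ _ "Arg z"]) auto
    qed
  next
    show "(\<lambda>\<phi>. complex_of_real t * cis \<phi>) ` {-a<..<a} \<subseteq> K"
    proof
      fix z assume "z \<in> (\<lambda>\<phi>. complex_of_real t * cis \<phi>) ` {-a<..<a}"
      then obtain \<phi> where \<phi>: "\<phi> \<in> {-a<..<a}" "z = complex_of_real t * cis \<phi>" by auto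
      have ap: "a \<le> pi" unfolding a_def using arccos_bounded nt1 by auto
      have "n / t < cos \<phi>" using angle_iff[OF _ _ nt1, of \<phi>] \<phi> ap unfolding a_def by auto
      then have "n < t * cos \<phi>" using t by (simp add: divide_less_eq mult.commute)
      moreover have "norm z = t" using \<phi> t by (simp add: norm_mult)
      ultimately show "z \<in> K" unfolding K_def using \<phi> by simp
    qed
  qed
  have Kconn: "connected K" unfolding Kimg
    by (intro connected_continuous_image continuous_intros) auto
  have tK: "complex_of_real t \<in> K" unfolding K_def using t nt by simp
  have sub1: "K \<subseteq> arcJ \<theta> t"
    unfolding arcJ_def S_def[symmetric] by (rule connected_component_maximal[OF tK Kconn KS])
  have sub2: "arcJ \<theta> t \<subseteq> K"
  proof
    fix z assume z: "z \<in> arcJ \<theta> t"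
    define D where "D = connected_component_set S (complex_of_real t)"
    have zD: "z \<in> D" using z unfolding D_def arcJ_def S_def .
    have DS: "D \<subseteq> S" unfolding D_def by (rule connected_component_subset)
    have tD: "complex_of_real t \<in> D" unfolding D_def using tK KS
      by (simp add: subsetD)
    have cD: "connected (Re ` D)"
      by (intro connected_continuous_image continuous_intros) (simp add: D_def)
    have noN: "Re w \<noteq> n" if "w \<in> D" for w
    proof
      assume h: "Re w = n"
      have wS: "w \<in> S" using that DS by auto
      then have ws: "w \<in> sphere 0 t" unfolding S_def by auto
      have "(Im w)^2 = t^2 - n^2" using sph[OF ws] h by simp
      from block_iff[OF th t _ this] npos have "n * tan (\<theta>/2) \<le> \<bar>Im w\<bar>"
        using nle unfolding c_def by simp
      moreover have "1 \<le> \<lfloor>t * cos (\<theta>/2)\<rfloor>" using npos unfolding n_def by simp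
      then have "\<lfloor>t * cos (\<theta>/2)\<rfloor> \<noteq> 0" by linarith
      moreover have "\<bar>real_of_int \<lfloor>t * cos (\<theta>/2)\<rfloor>\<bar> = real_of_int \<lfloor>t * cos (\<theta>/2)\<rfloor>"
        using npos unfolding n_def by simp
      ultimately have "\<not> w \<in> slit_domain \<theta>" using h unfolding memS slit_height_def n_def
        by auto
      then show False using wS unfolding S_def by auto
    qed
    have "n < Re z"
    proof (rule ccontr)
      assume "\<not> n < Re z"
      then have "Re z \<le> n" by simp
      from connectedD_interval[OF cD _ _ this, of "Re (complex_of_real t)"]
      have "n \<in> Re ` D" using zD tD nt by (metis Re_complex_of_real image_eqI less_imp_le)
      then show False using noN by auto
    qed
    moreover have "z \<in> sphere 0 t" using zD DS S_def by auto
    ultimately show "z \<in> K" unfolding K_def by simp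
  qed
  show ?thesis using sub1 sub2 K_def by auto
qed


lemma Theta_eq:
  fixes \<theta> t :: real
  assumes th: "0 < \<theta>" "\<theta> < pi" and t: "0 < t" and n1: "1 \<le> t * cos (\<theta>/2)"
  shows "Theta \<theta> t = 2 * arccos (real_of_int \<lfloor>t * cos (\<theta>/2)\<rfloor> / t)"
proof -
  define n where "n = real_of_int \<lfloor>t * cos (\<theta>/2)\<rfloor>"
  have c1: "cos (\<theta>/2) < 1"
  proof -
    have "cos (\<theta>/2) < cos 0" using th by (intro cos_monotone_0_pi) auto
    then show ?thesis by simp
  qed
  have nle: "n \<le> t * cos (\<theta>/2)" unfolding n_def by simp
  have npos: "1 \<le> n" using n1 unfolding n_def by (simp add: le_floor_iff)
  have "t * cos (\<theta>/2) < t * 1" using c1 t by (intro mult_strict_left_mono)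
  then have nt: "n < t" using nle by simp
  have "0 \<le> n / t" using npos t by simp
  then have nt1a: "-1 \<le> n / t" by linarith
  have nt1b: "n / t \<le> 1" using nt t by simp
  define a where "a = arccos (n / t)"
  have a0: "0 \<le> a" "a \<le> pi" unfolding a_def using arccos_bounded nt1a nt1b by auto
  have J: "arcJ \<theta> t = {z \<in> sphere 0 t. n < Re z}"
    unfolding n_def by (rule arcJ_eq[OF th t n1])
  have "{\<phi> \<in> {-pi<..pi}. complex_of_real t * cis \<phi> \<in> arcJ \<theta> t} = {-a<..<a}"
  proof (rule set_eqI)
    fix \<phi>
    have nrm: "norm (complex_of_real t * cis \<phi>) = t" using t by (simp add: norm_mult)
    have "complex_of_real t * cis \<phi> \<in> arcJ \<theta> t \<longleftrightarrow> n < t * cos \<phi>"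
      unfolding J using nrm by simp
    also have "\<dots> \<longleftrightarrow> n / t < cos \<phi>" using t by (simp add: divide_less_eq mult.commute)
    finally have eq: "complex_of_real t * cis \<phi> \<in> arcJ \<theta> t \<longleftrightarrow> n / t < cos \<phi>" .
    show "\<phi> \<in> {\<phi> \<in> {-pi<..pi}. complex_of_real t * cis \<phi> \<in> arcJ \<theta> t} \<longleftrightarrow> \<phi> \<in> {-a<..<a}"
    proof
      assume "\<phi> \<in> {\<phi> \<in> {-pi<..pi}. complex_of_real t * cis \<phi> \<in> arcJ \<theta> t}"
      then have "-pi < \<phi>" "\<phi> \<le> pi" "n / t < cos \<phi>" using eq by auto
      then have "\<bar>\<phi>\<bar> < a" unfolding a_def using angle_iff[OF _ _ nt1a nt1b] by auto
      then show "\<phi> \<in> {-a<..<a}" by auto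
    next
      assume "\<phi> \<in> {-a<..<a}"
      then have p: "\<bar>\<phi>\<bar> < a" by auto
      then have "-pi < \<phi>" "\<phi> < pi" using a0 by auto
      moreover have "n / t < cos \<phi>" using angle_iff[OF _ _ nt1a nt1b, of \<phi>] p calculation
        unfolding a_def by auto
      ultimately show "\<phi> \<in> {\<phi> \<in> {-pi<..pi}. complex_of_real t * cis \<phi> \<in> arcJ \<theta> t}"
        using eq by auto
    qed
  qed
  then have "measure lborel {\<phi> \<in> {-pi<..pi}. complex_of_real t * cis \<phi> \<in> arcJ \<theta> t} = 2 * a"
    using a0 by simp
  then show ?thesis unfolding Theta_def circle_arc_length_def using t unfolding a_def n_def by simp
qed

theorem lemma3p2:
  fixes \<theta> :: real
  assumes "0 < \<theta>" and "\<theta> < pi"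
  shows "((\<lambda>t. Theta \<theta> t) \<longlongrightarrow> \<theta>) at_top"
proof -
  define c where "c = cos (\<theta>/2)"
  have c0: "0 < c" unfolding c_def using assms by (intro cos_gt_zero_pi) auto
  have c1: "c < 1"
  proof -
    have "cos (\<theta>/2) < cos 0" using assms by (intro cos_monotone_0_pi) auto
    then show ?thesis unfolding c_def by simp
  qed
  define g where "g = (\<lambda>t::real. real_of_int \<lfloor>t * c\<rfloor> / t)"
  have ev: "eventually (\<lambda>t. 2 * arccos (g t) = Theta \<theta> t) at_top"
  proof (rule eventually_mono[OF eventually_ge_at_top[of "1 / c + 1"]])
    fix t :: real assume h: "1 / c + 1 \<le> t"
    have "1 / c < t" using h by linarith
    then have t: "0 < t" "1 \<le> t * c" using c0 
      by (auto simp: divide_less_eq mult.commute less_imp_le intro: less_trans[OF _ \<open>1/c < t\<close>])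
    show "2 * arccos (g t) = Theta \<theta> t"
      using Theta_eq[OF assms t(1)] t(2) unfolding g_def c_def by simp
  qed
  have lo: "((\<lambda>t::real. c - inverse t) \<longlongrightarrow> c) at_top"
  proof -
    have "((\<lambda>t::real. inverse t) \<longlongrightarrow> 0) at_top"
      by (rule tendsto_inverse_0_at_top[OF filterlim_ident])
    then show ?thesis using tendsto_diff[OF tendsto_const, of "\<lambda>t. inverse t" 0 at_top c] by simp
  qed
  have gl: "(g \<longlongrightarrow> c) at_top"
  proof (rule tendsto_sandwich[OF _ _ lo tendsto_const])
    show "eventually (\<lambda>t. c - inverse t \<le> g t) at_top"
    proof (rule eventually_mono[OF eventually_gt_at_top[of 0]])
      fix t :: real assume t: "0 < t"
      have "t * c - 1 \<le> real_of_int \<lfloor>t * c\<rfloor>" by linarith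
      then have "(t * c - 1) / t \<le> g t" unfolding g_def using t by (simp add: divide_right_mono)
      moreover have "(t * c - 1) / t = c - inverse t" using t by (simp add: field_simps)
      ultimately show "c - inverse t \<le> g t" by simp
    qed
    show "eventually (\<lambda>t. g t \<le> c) at_top"
    proof (rule eventually_mono[OF eventually_gt_at_top[of 0]])
      fix t :: real assume t: "0 < t"
      have "real_of_int \<lfloor>t * c\<rfloor> \<le> t * c" by simp
      then show "g t \<le> c" unfolding g_def using t by (simp add: pos_divide_le_eq mult.commute)
    qed
  qed
  have "((\<lambda>t. 2 * arccos (g t)) \<longlongrightarrow> 2 * arccos c) at_top"
    using isCont_tendsto_compose[OF isCont_arccos gl] c0 c1 by (intro tendsto_mult_left) auto
  moreover have "2 * arccos c = \<theta>" unfolding c_def using assms by (simp add: arccos_cos)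
  ultimately have "((\<lambda>t. 2 * arccos (g t)) \<longlongrightarrow> \<theta>) at_top" by simp
  then show ?thesis by (rule Lim_transform_eventually[OF _ ev])
qed

end
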